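(* Let $K$ be a field of characteristic $\neq 2$, $A\in K[t]$ non-zero, and let $(x,y,z)$ be a fundamental Markoff triple for $A$. (1) If $x\neq 0$, then $A$ and $x$ are constants (elements of $K$). (2) If $x=0$, then $K$ contains a square root $i$ of $-1$, and there exist $f\in K[t]\setminus K$ and $\varepsilon\in\{\pm1\}$ with $y=\varepsilon i f$ and $z=f$.
   Context: For non-zero $A\in K[t]$, solutions are triples $(x,y,z)\in K[t]^3$ with $x^2+y^2+z^2=Axyz$. The degree of the zero polynomial is $-\infty$. The height is $\max\{\deg x,\deg y,\deg z\}$. A Markoff triple is a solution with positive height and $\deg x\le\deg y\le\deg z$; it is fundamental if moreover $\deg y=\deg z$. *)

theory Defs
  imports "HOL-Computational_Algebra.Polynomial" "HOL-Library.Extended_Real"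
begin

definition pdeg :: "'a::zero poly \<Rightarrow> ereal" where
  "pdeg p = (if p = 0 then -\<infinity> else ereal (real (degree p)))"

definition markoff_solution :: "'k::field poly \<Rightarrow> 'k poly \<Rightarrow> 'k poly \<Rightarrow> 'k poly \<Rightarrow> bool" where
  "markoff_solution A x y z \<longleftrightarrow> x^2 + y^2 + z^2 = A * x * y * z"

definition height :: "'k::zero poly \<Rightarrow> 'k poly \<Rightarrow> 'k poly \<Rightarrow> ereal" where
  "height x y z = max (pdeg x) (max (pdeg y) (pdeg z))"

definition markoff_triple :: "'k::field poly \<Rightarrow> 'k poly \<Rightarrow> 'k poly \<Rightarrow> 'k poly \<Rightarrow> bool" where
  "markoff_triple A x y z \<longleftrightarrow> markoff_solution A x y z \<and> height x y z > 0
     \<and> pdeg x \<le> pdeg y \<and> pdeg y \<le> pdeg z"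

definition fundamental_markoff_triple :: "'k::field poly \<Rightarrow> 'k poly \<Rightarrow> 'k poly \<Rightarrow> 'k poly \<Rightarrow> bool" where
  "fundamental_markoff_triple A x y z \<longleftrightarrow> markoff_triple A x y z \<and> pdeg y = pdeg z"

end

theory Submission
  imports Defs
begin

theorem lemma2p2:
  fixes A x y z :: "'k::field poly"
  assumes char: "(2::'k) \<noteq> 0"
    and A: "A \<noteq> 0"
    and fund: "fundamental_markoff_triple A x y z"
  shows "(x \<noteq> 0 \<longrightarrow> degree A = 0 \<and> degree x = 0)
       \<and> (x = 0 \<longrightarrow> (\<exists>i::'k. i^2 = -1 \<and>
            (\<exists>f \<epsilon>. degree f \<ge> 1 \<and> \<epsilon> \<in> {1, -1} \<and> y = smult (\<epsilon> * i) f \<and> z = f)))"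
proof -
  have eq: "x^2 + y^2 + z^2 = A * x * y * z"
    and h: "height x y z > 0" and xy: "pdeg x \<le> pdeg y" and yz: "pdeg y = pdeg z"
    using fund unfolding fundamental_markoff_triple_def markoff_triple_def markoff_solution_def
    by auto
  have hz: "height x y z = pdeg z" using xy yz unfolding height_def by (simp add: max_def)
  have z0: "z \<noteq> 0" and dz: "degree z \<ge> 1" using h hz unfolding pdeg_def
    by (auto split: if_splits)
  have y0: "y \<noteq> 0" and dyz: "degree y = degree z" using yz z0 unfolding pdeg_def
    by (auto split: if_splits)
  show ?thesis
  proof (rule conjI; rule impI)
    assume x0: "x \<noteq> 0"
    have dxy: "degree x \<le> degree y" using xy x0 y0 unfolding pdeg_def by auto
    have "degree (x^2 + y^2 + z^2) \<le> 2 * degree z"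
    proof -
      have "degree (x^2 + y^2 + z^2) \<le> max (degree (x^2 + y^2)) (degree (z^2))"
        by (rule degree_add_le_max)
      moreover have "degree (x^2 + y^2) \<le> max (degree (x^2)) (degree (y^2))"
        by (rule degree_add_le_max)
      moreover have "degree (x^2) \<le> 2 * degree x" "degree (y^2) \<le> 2 * degree y"
        "degree (z^2) \<le> 2 * degree z" using degree_power_le[of _ 2] by (simp_all add: mult.commute)
      ultimately show ?thesis using dxy dyz by auto
    qed
    moreover have "degree (A * x * y * z) = degree A + degree x + degree y + degree z"
      using A x0 y0 z0 by (simp add: degree_mult_eq)
    ultimately have "degree A + degree x + degree y + degree z \<le> 2 * degree z"
      using eq by simp
    then show "degree A = 0 \<and> degree x = 0" using dyz by simp
  next
    assume x0: "x = 0"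
    have e: "y^2 + z^2 = 0" using eq x0 by (simp add: power2_eq_square)
    define i where "i = lead_coeff y / lead_coeff z"
    have yz2: "y^2 = - (z^2)" using e by (simp only: add_eq_0_iff2)
    have "lead_coeff (y^2) = - lead_coeff (z^2)"
      using yz2 by (simp only: lead_coeff_minus)
    hence lcq: "(lead_coeff y)^2 = - ((lead_coeff z)^2)" by (simp only: lead_coeff_power)
    have lz: "lead_coeff z \<noteq> 0" using z0 by simp
    have i2: "i^2 = -1"
    proof -
      have "i^2 = (lead_coeff y) ^ 2 / (lead_coeff z) ^ 2" unfolding i_def by (simp only: power_divide)
      also have "\<dots> = - ((lead_coeff z)^2) / (lead_coeff z) ^ 2" by (simp only: lcq)
      also have "\<dots> = -1" using lz by simp
      finally show ?thesis .
    qed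
    have "(y - smult i z) * (y + smult i z) = y*y - smult (i*i) (z*z)" by (simp add: algebra_simps)
    also have "\<dots> = y*y + z*z" using i2 by (simp add: power2_eq_square)
    also have "\<dots> = 0" using e by (simp add: power2_eq_square)
    finally have "(y - smult i z) * (y + smult i z) = 0" .
    hence "y - smult i z = 0 \<or> y + smult i z = 0" by (simp only: mult_eq_0_iff)
    hence "y = smult i z \<or> y = smult (-i) z" proof
      assume "y - smult i z = 0" thus ?thesis by simp
    next
      assume "y + smult i z = 0" hence "y = - smult i z" by (simp only: add_eq_0_iff2)
      thus ?thesis by simp
    qed
    then show "\<exists>i::'k. i^2 = -1 \<and>
            (\<exists>f \<epsilon>. degree f \<ge> 1 \<and> \<epsilon> \<in> {1, -1} \<and> y = smult (\<epsilon> * i) f \<and> z = f)"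
    proof
      assume "y = smult i z" thus ?thesis using i2 dz by (intro exI[of _ i] conjI exI[of _ z] exI[of _ 1]) auto
    next
      assume "y = smult (-i) z" thus ?thesis using i2 dz by (intro exI[of _ i] conjI exI[of _ z] exI[of _ "-1"]) auto
    qed
  qed
qed

end
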